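(* Let $q$ be a prime power and use the setting of the context. Then $\mathcal C=\bigcup_{i=0}^{q^2+q}\mathcal G_i$ is a $(6,(q^3-1)(q^2+q+1),4;3)_q$ constant-dimension subspace code; that is, it consists of $(q^3-1)(q^2+q+1)$ planes of ${\rm PG}(5,q)$, any two distinct of which meet in at most one point.
   Context: In ${\rm PG}(5,q)$ points are row vectors ${\bf X}=(X_1,\dots,X_6)$; write $X=(X_1,X_2,X_3)$, $Y=(X_4,X_5,X_6)$. Let $\pi_1$ be the plane $X_1=X_2=X_3=0$ and $\pi_2$ the plane $X_4=X_5=X_6=0$. Let $A$ be a Singer cycle of ${\rm GL}(3,q)$, i.e. a $3\times3$ matrix over ${\rm GF}(q)$ of multiplicative order $q^3-1$. For $0\le i\le q^2+q$ let $\mathcal Q_i$ be the quadric of ${\rm PG}(5,q)$ with quadratic form ${\bf Q}_i({\bf X})=XA^iY^T$; each $\mathcal Q_i$ is a non-degenerate hyperbolic quadric $\mathcal Q^+(5,q)$ containing $\pi_1$ and $\pi_2$, and the $\mathcal Q_i$ are pairwise distinct. The planes on $\mathcal Q^+(5,q)$ fall into two classes of size $(q+1)(q^2+1)$ (two planes of the same class meet in exactly one point; planes of different classes are disjoint or meet in a line); since $\pi_1\cap\pi_2=\emptyset$, $\pi_1$ and $\pi_2$ lie in different classes. Let $\mathcal G_i$ be the set of the $q^3-1$ planes of $\mathcal Q_i$ belonging to the same class as $\pi_1$, distinct from $\pi_1$ and disjoint from $\pi_2$. An $(n,M,4;3)_q$ constant-dimension code is a set of $M$ planes of ${\rm PG}(n-1,q)$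 pairwise meeting in at most a point. *)

theory Defs
  imports "HOL-Analysis.Analysis" "HOL-Library.Numeral_Type"
begin

text \<open>Coordinates X_1..X_6 are the indices 0..5 of type 6. Projective subspaces of
 PG(5,q) are identified with vector subspaces of GF(q)^6; a plane of PG(5,q)
 is a 3-dimensional subspace, a point a 1-dimensional one.\<close>

primrec matpow :: "('a::semiring_1)^'n^'n \<Rightarrow> nat \<Rightarrow> 'a^'n^'n" where
  "matpow A 0 = mat 1"
| "matpow A (Suc k) = A ** matpow A k"

definition singer_cycle :: "('a::{field,finite})^3^3 \<Rightarrow> bool" where
  "singer_cycle A \<longleftrightarrow> invertible A \<and>
     matpow A (CARD('a)^3 - 1) = mat 1 \<and>
     (\<forall>k. 0 < k \<and> k < CARD('a)^3 - 1 \<longrightarrow> matpow A k \<noteq> mat 1)"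

definition idxX :: "3 \<Rightarrow> 6" where
  "idxX j = (if j = 0 then 0 else if j = 1 then 1 else 2)"

definition idxY :: "3 \<Rightarrow> 6" where
  "idxY j = (if j = 0 then 3 else if j = 1 then 4 else 5)"

definition vecX :: "'a^6 \<Rightarrow> 'a^3" where "vecX v = (\<chi> j. v $ idxX j)"
definition vecY :: "'a^6 \<Rightarrow> 'a^3" where "vecY v = (\<chi> j. v $ idxY j)"

definition quadform :: "('a::field)^3^3 \<Rightarrow> nat \<Rightarrow> 'a^6 \<Rightarrow> 'a" where
  "quadform A i v = (\<Sum>j\<in>UNIV. vecX v $ j * (matpow A i *v vecY v) $ j)"

definition pg_plane :: "(('a::field)^6) set \<Rightarrow> bool" where
  "pg_plane W \<longleftrightarrow> vec.subspace W \<and> vec.dim W = 3"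

definition pi1 :: "(('a::field)^6) set" where "pi1 = {v. vecX v = 0}"
definition pi2 :: "(('a::field)^6) set" where "pi2 = {v. vecY v = 0}"

definition quadric_planes :: "('a::field)^3^3 \<Rightarrow> nat \<Rightarrow> ('a^6) set set" where
  "quadric_planes A i = {W. pg_plane W \<and> (\<forall>v\<in>W. quadform A i v = 0)}"

text \<open>Two planes of Q^+(5,q) are in the same class iff they meet in a point or
 coincide (vector dimension of the intersection 1 or 3), and in different classes
 iff they are disjoint or meet in a line (dimension 0 or 2).\<close>
definition same_class :: "(('a::field)^6) set \<Rightarrow> ('a^6) set \<Rightarrow> bool" where
  "same_class U W \<longleftrightarrow> vec.dim (U \<inter> W) = 1 \<or> vec.dim (U \<inter> W) = 3"

definition G :: "('a::field)^3^3 \<Rightarrow> nat \<Rightarrow> ('a^6) set set" where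
  "G A i = {W \<in> quadric_planes A i. same_class W pi1 \<and> W \<noteq> pi1 \<and> W \<inter> pi2 = {0}}"

end

theory Submission
  imports Defs "HOL-Library.Cardinality"
begin

lemma exhaust3: fixes x :: 3 shows "x = 0 \<or> x = 1 \<or> x = 2"
proof (induct x)
  case (of_int z)
  then have "z = 0 \<or> z = 1 \<or> z = 2" by fastforce
  then show ?case by auto
qed

lemma exhaust6: fixes x :: 6 shows "x = 0 \<or> x = 1 \<or> x = 2 \<or> x = 3 \<or> x = 4 \<or> x = 5"
proof (induct x)
  case (of_int z)
  then have "z = 0 \<or> z = 1 \<or> z = 2 \<or> z = 3 \<or> z = 4 \<or> z = 5" by fastforce
  then show ?case by auto
qed

lemma UNIV3: "(UNIV::3 set) = {0,1,2}" using exhaust3 by auto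

lemma sum3: "(\<Sum>j\<in>(UNIV::3 set). f j) = f 0 + f 1 + f 2"
proof -
  have "(\<Sum>j\<in>(UNIV::3 set). f j) = sum f {0,1,2}" by (simp only: UNIV3)
  also have "\<dots> = f 0 + (f 1 + f 2)" by (subst sum.insert; simp)+
  finally show ?thesis by (simp add: add.assoc)
qed

lemma forall3: "(\<forall>i::3. P i) \<longleftrightarrow> P 0 \<and> P 1 \<and> P 2"
proof
  assume h: "P 0 \<and> P 1 \<and> P 2"
  show "\<forall>i. P i"
  proof
    fix i :: 3 show "P i" using exhaust3[of i] h by auto
  qed
qed simp

lemma vec3_eq: "(x::'b^3) = y \<longleftrightarrow> x$0 = y$0 \<and> x$1 = y$1 \<and> x$2 = y$2"
  by (simp only: vec_eq_iff forall3)

definition v3 :: "'b \<Rightarrow> 'b \<Rightarrow> 'b \<Rightarrow> 'b^3" where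
  "v3 a b c = (\<chi> k. if k = 0 then a else if k = 1 then b else c)"

lemma v3_nth[simp]: "v3 a b c $ 0 = a" "v3 a b c $ 1 = b" "v3 a b c $ 2 = c"
  by (simp_all add: v3_def)

definition dotp :: "('b::comm_ring_1)^3 \<Rightarrow> 'b^3 \<Rightarrow> 'b" where
  "dotp x y = (\<Sum>j\<in>UNIV. x$j * y$j)"

lemma dotp3: "dotp x y = x$0*y$0 + x$1*y$1 + x$2*y$2"
  by (simp add: dotp_def sum3)

definition cross :: "('b::comm_ring_1)^3 \<Rightarrow> 'b^3 \<Rightarrow> 'b^3" where
  "cross b w = v3 (b$1*w$2 - b$2*w$1) (b$2*w$0 - b$0*w$2) (b$0*w$1 - b$1*w$0)"

lemma cross_nth[simp]: "cross b w $ 0 = b$1*w$2 - b$2*w$1"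
  "cross b w $ 1 = b$2*w$0 - b$0*w$2" "cross b w $ 2 = b$0*w$1 - b$1*w$0"
  by (simp_all add: cross_def)

definition altm :: "('b::comm_ring_1)^3 \<Rightarrow> 'b^3^3" where
  "altm b = v3 (v3 0 (- b$2) (b$1)) (v3 (b$2) 0 (- b$0)) (v3 (- b$1) (b$0) 0)"

lemma mv3: "((M::('b::comm_ring_1)^3^3) *v x) $ i = M$i$0 * x$0 + M$i$1 * x$1 + M$i$2 * x$2"
  by (simp add: matrix_vector_mult_def sum3)

lemma mm3: "((M::('b::comm_ring_1)^3^3) ** N) $ i $ j = M$i$0 * N$0$j + M$i$1 * N$1$j + M$i$2 * N$2$j"
  by (simp add: matrix_matrix_mult_def sum3)

lemma altm_mv: "altm b *v w = cross b w"
  by (simp add: vec3_eq mv3 altm_def algebra_simps)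

lemma altm_inj: "altm b = altm c \<Longrightarrow> b = c"
  by (simp add: altm_def vec3_eq)

lemma altm_0: "altm 0 = 0"
  by (simp add: altm_def vec3_eq)

lemma dotp_cross_self: "dotp y (cross b y) = 0"
  by (simp add: dotp3 algebra_simps)

lemma dotp_cross_self2: "dotp b (cross b y) = 0"
  by (simp add: dotp3 algebra_simps)

lemma triple: "dotp a (cross b c) = dotp c (cross a b)"
  by (simp add: dotp3 algebra_simps)

lemma dotp_comm: "dotp a b = dotp b a"
  by (simp add: dotp3 algebra_simps)

lemma cross_anti: "cross a b = - cross b a"
  by (simp add: vec3_eq algebra_simps)

lemma bac: "cross (cross u v) y = dotp u y *s v - dotp v y *s u"
  by (simp add: vec3_eq dotp3 algebra_simps)

lemma dotp_add_l: "dotp (a + b) c = dotp a c + dotp b c"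
  by (simp add: dotp3 algebra_simps)
lemma dotp_add_r: "dotp c (a + b) = dotp c a + dotp c b"
  by (simp add: dotp3 algebra_simps)
lemma dotp_diff_r: "dotp c (a - b) = dotp c a - dotp c b"
  by (simp add: dotp3 algebra_simps)
lemma dotp_scale_r: "dotp c (t *s a) = t * dotp c a"
  by (simp add: dotp3 algebra_simps)
lemma dotp_scale_l: "dotp (t *s a) c = t * dotp a c"
  by (simp add: dotp3 algebra_simps)
lemma cross_add_r: "cross c (a + b) = cross c a + cross c b"
  by (simp add: vec3_eq algebra_simps)
lemma cross_diff_r: "cross c (a - b) = cross c a - cross c b"
  by (simp add: vec3_eq algebra_simps)
lemma cross_scale_l: "cross (t *s a) c = t *s cross a c"
  by (simp add: vec3_eq algebra_simps)
lemma cross_scale_r: "cross c (t *s a) = t *s cross c a"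
  by (simp add: vec3_eq algebra_simps)
lemma cross_self: "cross a a = 0"
  by (simp add: vec3_eq algebra_simps)

lemma dotp_transpose: "dotp (M *v y) z = dotp y (transpose M *v z)"
  by (simp add: dotp3 mv3 transpose_def algebra_simps)

lemma dotp_zero: "(\<And>z. dotp x z = 0) \<Longrightarrow> (x::('b::comm_ring_1)^3) = 0"
proof -
  assume h: "\<And>z. dotp x z = 0"
  have "dotp x (v3 1 0 0) = 0" "dotp x (v3 0 1 0) = 0" "dotp x (v3 0 0 1) = 0" using h by auto
  then show ?thesis by (simp add: dotp3 vec3_eq)
qed

lemma dotp_nonzero: "(x::('b::comm_ring_1)^3) \<noteq> 0 \<Longrightarrow> \<exists>z. dotp z x \<noteq> 0"
  using dotp_zero dotp_comm by metis

lemma cross_zero: fixes b u :: "('b::field)^3"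
  assumes "b \<noteq> 0" "cross b u = 0" shows "\<exists>t. u = t *s b"
proof -
  have e: "b$1 * u$2 = b$2 * u$1" "b$2 * u$0 = b$0 * u$2" "b$0 * u$1 = b$1 * u$0"
    using assms(2) by (simp_all add: vec3_eq)
  consider "b$0 \<noteq> 0" | "b$1 \<noteq> 0" | "b$2 \<noteq> 0" using assms(1) by (auto simp: vec3_eq)
  then show ?thesis
  proof cases
    case 1
    show ?thesis apply (rule exI[of _ "u$0 / b$0"]) using 1 e by (simp add: vec3_eq field_simps)
  next
    case 2
    show ?thesis apply (rule exI[of _ "u$1 / b$1"]) using 2 e by (simp add: vec3_eq field_simps)
  next
    case 3
    show ?thesis apply (rule exI[of _ "u$2 / b$2"]) using 3 e by (simp add: vec3_eq field_simps)
  qed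
qed

lemma rank2: fixes b :: "('b::field)^3"
  assumes "b \<noteq> 0" shows "\<exists>w1 w2. cross (cross b w1) (cross b w2) \<noteq> 0"
proof -
  consider "b$0 \<noteq> 0" | "b$1 \<noteq> 0" | "b$2 \<noteq> 0" using assms by (auto simp: vec3_eq)
  then show ?thesis
  proof cases
    case 1
    have "cross (cross b (v3 0 1 0)) (cross b (v3 0 0 1)) $ 0 \<noteq> 0" using 1
      by (simp add: algebra_simps power2_eq_square[symmetric])
    then show ?thesis by (metis zero_index)
  next
    case 2
    have "cross (cross b (v3 0 0 1)) (cross b (v3 1 0 0)) $ 1 \<noteq> 0" using 2
      by (simp add: algebra_simps power2_eq_square[symmetric])
    then show ?thesis by (metis zero_index)
  next
    case 3
    have "cross (cross b (v3 1 0 0)) (cross b (v3 0 1 0)) $ 2 \<noteq> 0" using 3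
      by (simp add: algebra_simps power2_eq_square[symmetric])
    then show ?thesis by (metis zero_index)
  qed
qed

lemma alt_char: fixes B :: "('b::comm_ring_1)^3^3"
  assumes "\<And>y. dotp y (B *v y) = 0" shows "\<exists>b. B = altm b"
proof -
  have h: "dotp (v3 1 0 0) (B *v v3 1 0 0) = 0" "dotp (v3 0 1 0) (B *v v3 0 1 0) = 0"
    "dotp (v3 0 0 1) (B *v v3 0 0 1) = 0" "dotp (v3 1 1 0) (B *v v3 1 1 0) = 0"
    "dotp (v3 1 0 1) (B *v v3 1 0 1) = 0" "dotp (v3 0 1 1) (B *v v3 0 1 1) = 0"
    using assms by auto
  then have d: "B$0$0 = 0" "B$1$1 = 0" "B$2$2 = 0" and
    o: "B$0$1 + B$1$0 = 0" "B$0$2 + B$2$0 = 0" "B$1$2 + B$2$1 = 0"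
    by (simp_all add: dotp3 mv3)
  have o': "B$0$1 = - B$1$0" "B$2$0 = - B$0$2" "B$1$2 = - B$2$1"
    using o by (simp_all add: eq_neg_iff_add_eq_0 add.commute)
  show ?thesis
    apply (rule exI[of _ "v3 (B$2$1) (B$0$2) (B$1$0)"])
    using d o' by (simp add: altm_def vec3_eq)
qed

lemma mat_mult3: "(mat c :: ('b::comm_ring_1)^3^3) ** mat d = mat (c*d)"
  by (simp add: vec3_eq mm3 mat_def)

lemma mp_add: "matpow A (m+n) = matpow A m ** matpow A n"
  by (induct m) (simp_all add: matrix_mul_assoc)

lemma mp_mult: "matpow A (m*n) = matpow (matpow A m) n"
  by (induct n) (simp_all add: mp_add)

lemma mp_mat: "matpow (mat c :: ('b::comm_ring_1)^3^3) n = mat (c^n)"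
  by (induct n) (simp_all add: mat_mult3)

lemma mat1_nz: "(mat 1 :: ('b::comm_ring_1)^3^3) \<noteq> 0"
proof
  assume "(mat 1 :: ('b::comm_ring_1)^3^3) = 0"
  then have "(mat 1 :: ('b::comm_ring_1)^3^3) $ 0 $ 0 = 0" by simp
  then show False by (simp add: mat_def)
qed

lemma zero_mm3: "(0 :: ('b::comm_ring_1)^3^3) ** X = 0"
  by (simp add: vec3_eq mm3)

lemma cayley_hamilton3:
  fixes A :: "('b::comm_ring_1)^3^3"
  shows "A ** (A ** A) = mat (A$0$0 + A$1$1 + A$2$2) ** (A ** A)
     - mat (A$0$0*A$1$1 - A$0$1*A$1$0 + A$0$0*A$2$2 - A$0$2*A$2$0 + A$1$1*A$2$2 - A$1$2*A$2$1) ** A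
     + mat (A$0$0*(A$1$1*A$2$2 - A$1$2*A$2$1) - A$0$1*(A$1$0*A$2$2 - A$1$2*A$2$0)
           + A$0$2*(A$1$0*A$2$1 - A$1$1*A$2$0))"
  by (simp add: vec3_eq mm3 mat_def algebra_simps)

definition pm :: "('b::comm_ring_1)^3^3 \<Rightarrow> 'b \<Rightarrow> 'b \<Rightarrow> 'b \<Rightarrow> 'b^3^3" where
  "pm A a b c = mat a + mat b ** A + mat c ** (A ** A)"

definition chT :: "('b::comm_ring_1)^3^3 \<Rightarrow> 'b" where "chT A = A$0$0 + A$1$1 + A$2$2"
definition chS :: "('b::comm_ring_1)^3^3 \<Rightarrow> 'b" where
  "chS A = A$0$0*A$1$1 - A$0$1*A$1$0 + A$0$0*A$2$2 - A$0$2*A$2$0 + A$1$1*A$2$2 - A$1$2*A$2$1"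
definition chD :: "('b::comm_ring_1)^3^3 \<Rightarrow> 'b" where
  "chD A = A$0$0*(A$1$1*A$2$2 - A$1$2*A$2$1) - A$0$1*(A$1$0*A$2$2 - A$1$2*A$2$0)
           + A$0$2*(A$1$0*A$2$1 - A$1$1*A$2$0)"

lemma pm_A: "A ** pm A a b c = pm A (c * chD A) (a - c * chS A) (b + c * chT A)"
  by (simp add: pm_def chT_def chS_def chD_def vec3_eq mm3 mat_def algebra_simps)

lemma pm_sub: "pm A a b c - pm A a' b' c' = pm A (a-a') (b-b') (c-c')"
  by (simp add: pm_def vec3_eq mm3 mat_def algebra_simps)

lemma pm_smul: "mat t ** pm A a b c = pm A (t*a) (t*b) (t*c)"
  by (simp add: pm_def vec3_eq mm3 mat_def algebra_simps)

lemma pm_mat: "mat t = pm A t 0 0"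
  by (simp add: pm_def vec3_eq mm3 mat_def)

lemma mp_pm: "\<exists>a b c. matpow A m = pm A a b c"
proof (induct m)
  case 0
  show ?case using pm_mat by (metis matpow.simps(1))
next
  case (Suc m)
  then obtain a b c where "matpow A m = pm A a b c" by blast
  then show ?case using pm_A by (metis matpow.simps(2))
qed

lemma card_ge2: "CARD('a::{field,finite}) \<ge> 2"
proof -
  have "card {0::'a, 1} = 2" by simp
  moreover have "card {0::'a, 1} \<le> CARD('a)" by (rule card_mono) auto
  ultimately show ?thesis by simp
qed

lemma fermat_field:
  fixes x :: "'a::{field,finite}"
  assumes "x \<noteq> 0" shows "x ^ (CARD('a) - 1) = 1"
proof -
  let ?U = "UNIV - {0::'a}"
  have fin: "finite ?U" by simp
  have inj: "inj_on (\<lambda>y. x * y) ?U" unfolding inj_on_def using assms by simp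
  have im: "(\<lambda>y. x * y) ` ?U = ?U"
  proof
    show "(\<lambda>y. x * y) ` ?U \<subseteq> ?U" using assms by auto
    show "?U \<subseteq> (\<lambda>y. x * y) ` ?U"
    proof
      fix z assume z: "z \<in> ?U"
      have "z = x * (z / x)" using assms by simp
      moreover have "z / x \<in> ?U" using z assms by simp
      ultimately show "z \<in> (\<lambda>y. x * y) ` ?U" by blast
    qed
  qed
  have bij: "bij_betw (\<lambda>y. x * y) ?U ?U" unfolding bij_betw_def using inj im by blast
  have "(\<Prod>y\<in>?U. x * y) = (\<Prod>y\<in>?U. y)"
    using prod.reindex_bij_betw[OF bij, of "\<lambda>y. y"] by simp
  moreover have "(\<Prod>y\<in>?U. x * y) = x ^ card ?U * (\<Prod>y\<in>?U. y)"
    by (simp add: prod.distrib)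
  moreover have "(\<Prod>y\<in>?U. y) \<noteq> 0" using fin by (simp add: prod_zero_iff)
  moreover have "card ?U = CARD('a) - 1" by (simp add: card_Diff_subset)
  ultimately show ?thesis by (metis mult_cancel_right1)
qed

context
  fixes A :: "('a::{field,finite})^3^3"
  assumes sA: "singer_cycle A"
begin

lemma N_ge: "CARD('a)^2 + CARD('a) < CARD('a)^3 - 1"
proof -
  have q: "CARD('a) \<ge> 2" by (rule card_ge2)
  then have "CARD('a)^3 = CARD('a) * CARD('a)^2" by (simp add: power3_eq_cube power2_eq_square)
  moreover have "CARD('a) * CARD('a)^2 \<ge> 2 * CARD('a)^2" using q by simp
  moreover have "CARD('a)^2 \<ge> 2 * CARD('a)" using q by (simp add: power2_eq_square)
  ultimately show ?thesis using q by linarith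
qed

lemma N_pos: "0 < CARD('a)^3 - 1" using N_ge by linarith

lemma mpN: "matpow A (CARD('a)^3 - 1) = mat 1"
  using sA by (simp add: singer_cycle_def)

lemma mpN': "matpow A (CARD('a)^3 - Suc 0) = mat 1"
  using mpN by simp

lemma mp_inv1: "m \<le> CARD('a)^3 - 1 \<Longrightarrow> matpow A m ** matpow A (CARD('a)^3 - 1 - m) = mat 1"
  by (metis mp_add mpN le_add_diff_inverse)

lemma mp_inv2: "m \<le> CARD('a)^3 - 1 \<Longrightarrow> matpow A (CARD('a)^3 - 1 - m) ** matpow A m = mat 1"
  by (metis mp_add mpN le_add_diff_inverse2)

lemma mp_dvd: assumes "matpow A n = mat 1" shows "(CARD('a)^3 - 1) dvd n"
proof (rule ccontr)
  let ?N = "CARD('a)^3 - 1"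
  assume nd: "\<not> ?N dvd n"
  have "n = ?N * (n div ?N) + n mod ?N" by simp
  then have "matpow A n = matpow (matpow A ?N) (n div ?N) ** matpow A (n mod ?N)"
    by (metis mp_add mp_mult)
  then have "matpow A (n mod ?N) = mat 1" using assms by (simp only: mpN mp_mat power_one matrix_mul_lid)
  moreover have "0 < n mod ?N" "n mod ?N < ?N" using nd N_pos
    by (simp_all add: mod_greater_zero_iff_not_dvd)
  ultimately show False using sA by (simp add: singer_cycle_def)
qed

lemma mp_inj_lt: assumes "m < n" "n < CARD('a)^3 - 1" "matpow A m = matpow A n"
  shows False
proof -
  let ?N = "CARD('a)^3 - 1"
  have "matpow A n = matpow A m ** matpow A (n - m)" using assms(1) by (metis mp_add le_add_diff_inverse less_imp_le)
  then have "matpow A (?N - m) ** matpow A n = (matpow A (?N - m) ** matpow A m) ** matpow A (n - m)"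
    by (simp add: matrix_mul_assoc)
  also have "\<dots> = matpow A (n - m)" using mp_inv2[of m] assms by simp
  finally have "matpow A (n - m) = mat 1" using mp_inv2[of m] assms by simp
  then show False using sA assms unfolding singer_cycle_def by auto
qed

lemma mp_inj: assumes "m < CARD('a)^3 - 1" "n < CARD('a)^3 - 1" "matpow A m = matpow A n"
  shows "m = n"
  using mp_inj_lt[of m n] mp_inj_lt[of n m] assms by (metis linorder_neqE_nat)

lemma mp_nz: "matpow A m \<noteq> 0"
proof
  let ?N = "CARD('a)^3 - 1"
  assume h: "matpow A m = 0"
  have "matpow A (m * ?N) = matpow (matpow A ?N) m" by (metis mp_mult mult.commute)
  also have "\<dots> = mat 1" by (simp only: mpN mp_mat power_one)
  finally have "matpow A (m * ?N) = mat 1" .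
  moreover have "matpow A (m * ?N) = matpow 0 ?N" using h by (simp add: mp_mult)
  moreover have "matpow (0::'a^3^3) ?N = 0"
  proof -
    obtain k where "?N = Suc k" using N_pos gr0_implies_Suc by blast
    then show ?thesis by (simp add: zero_mm3)
  qed
  ultimately have "(mat 1 :: 'a^3^3) = 0" by simp
  then show False using mat1_nz by blast
qed

end

lemma mat0_3: "(mat 0 :: ('b::comm_ring_1)^3^3) = 0"
  by (simp add: vec3_eq mat_def)

lemma N_fact: "(q::nat) \<ge> 1 \<Longrightarrow> q^3 - 1 = (q - 1) * (q^2 + q + 1)"
proof -
  assume "q \<ge> 1"
  then obtain r where "q = Suc r" by (metis Suc_le_D One_nat_def)
  then show ?thesis by (simp add: algebra_simps power2_eq_square power3_eq_cube)
qed

context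
  fixes A :: "('a::{field,finite})^3^3"
  assumes sA: "singer_cycle A"
begin

lemma field_P: "pm A a b c = 0 \<or> (\<exists>m < CARD('a)^3 - 1. pm A a b c = matpow A m)"
proof -
  let ?N = "CARD('a)^3 - 1"
  let ?P = "(\<lambda>(a,b,c). pm A a b c) ` (UNIV :: ('a \<times> 'a \<times> 'a) set)"
  let ?W = "(\<lambda>m. matpow A m) ` {..<?N}"
  have cW: "card ?W = ?N"
    by (subst card_image) (auto intro!: inj_onI mp_inj[OF sA])
  have z: "0 \<notin> ?W" using mp_nz[OF sA] by auto
  have WP: "?W \<subseteq> ?P"
  proof
    fix X assume "X \<in> ?W"
    then obtain m where "X = matpow A m" by auto
    then obtain a b c where "X = pm A a b c" using mp_pm by blast
    then show "X \<in> ?P" using rangeI[of "\<lambda>(a,b,c). pm A a b c" "(a,b,c)"] by simp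
  qed
  have zP: "0 \<in> ?P"
  proof -
    have "pm A 0 0 0 = 0" by (simp add: pm_def mat0_3 zero_mm3)
    then show ?thesis using rangeI[of "\<lambda>(a,b,c). pm A a b c" "(0,0,0)"] by simp
  qed
  have cP: "card ?P \<le> CARD('a)^3"
  proof -
    have "card ?P \<le> card (UNIV :: ('a \<times> 'a \<times> 'a) set)" by (rule card_image_le) simp
    also have "\<dots> = CARD('a)^3" by (simp add: power3_eq_cube)
    finally show ?thesis .
  qed
  have q1: "CARD('a)^3 \<ge> 1" using card_ge2[where 'a='a] by simp
  have c0: "card (insert 0 ?W) = CARD('a)^3"
    using z cW q1 by simp
  have eq: "insert 0 ?W = ?P"
    apply (rule card_subset_eq)
    using WP zP cP c0 card_mono[of ?P "insert 0 ?W"] by auto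
  have "pm A a b c \<in> ?P" using rangeI[of "\<lambda>(a,b,c). pm A a b c" "(a,b,c)"] by simp
  then have "pm A a b c \<in> insert 0 ?W" using eq by simp
  then show ?thesis by auto
qed

lemma P_inv: assumes "pm A a b c \<noteq> 0"
  shows "\<exists>X. pm A a b c ** X = mat 1 \<and> X ** pm A a b c = mat 1"
proof -
  obtain m where "m < CARD('a)^3 - 1" "pm A a b c = matpow A m" using field_P assms by blast
  then show ?thesis using mp_inv1[OF sA, of m] mp_inv2[OF sA, of m] by auto
qed

lemma E1: assumes "pm A a b c *v y = 0" "y \<noteq> 0" shows "pm A a b c = 0"
proof (rule ccontr)
  assume "pm A a b c \<noteq> 0"
  then obtain X where X: "X ** pm A a b c = mat 1" using P_inv by blast
  have "y = (X ** pm A a b c) *v y" using X by simp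
  also have "\<dots> = 0" using assms(1) by (simp add: matrix_vector_mul_assoc[symmetric])
  finally show False using assms(2) by simp
qed

lemma E2: assumes "transpose (pm A a b c) *v y = 0" "y \<noteq> 0" shows "pm A a b c = 0"
proof (rule ccontr)
  assume "pm A a b c \<noteq> 0"
  then obtain X where X: "pm A a b c ** X = mat 1" using P_inv by blast
  then have X': "transpose X ** transpose (pm A a b c) = mat 1"
    by (metis matrix_transpose_mul transpose_mat)
  have "y = (transpose X ** transpose (pm A a b c)) *v y" using X' by simp
  also have "\<dots> = 0" using assms(1) by (simp add: matrix_vector_mul_assoc[symmetric])
  finally show False using assms(2) by simp
qed

lemma E3: assumes "pm A a b c \<noteq> 0" shows "\<exists>w. pm A a b c *v w = v"
proof -
  obtain X where X: "pm A a b c ** X = mat 1" using P_inv assms by blast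
  have "pm A a b c *v (X *v v) = v" using X by (simp add: matrix_vector_mul_assoc)
  then show ?thesis by blast
qed

lemma F2: assumes "matpow A k = mat t" "0 < k" "k \<le> CARD('a)^2 + CARD('a)" shows False
proof -
  let ?q = "CARD('a)"
  have t: "t \<noteq> 0" using assms(1) mp_nz[OF sA, of k] by (auto simp: mat0_3)
  have "matpow A (k * (?q - 1)) = mat (t ^ (?q - 1))" by (simp add: mp_mult assms(1) mp_mat)
  also have "\<dots> = mat 1" using fermat_field[OF t] by simp
  finally have "(?q^3 - 1) dvd (k * (?q - 1))" by (rule mp_dvd[OF sA])
  then have "(?q - 1) * (?q^2 + ?q + 1) dvd (?q - 1) * k"
    using N_fact[of ?q] card_ge2[where 'a='a] by (simp add: mult.commute)
  then have "(?q^2 + ?q + 1) dvd k" using card_ge2[where 'a='a]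
    by (subst (asm) nat_mult_dvd_cancel1) auto
  then have "?q^2 + ?q + 1 \<le> k" using assms(2) by (simp add: dvd_imp_le)
  then show False using assms(3) by simp
qed

end

lemma mv_diff: "((X::('b::comm_ring_1)^3^3) - Y) *v y = X *v y - Y *v y"
  by (simp add: vec3_eq mv3 algebra_simps)
lemma mv_mat: "(mat t :: ('b::comm_ring_1)^3^3) *v y = t *s y"
  by (simp add: vec3_eq mv3 mat_def)
lemma mv_add: "(X::('b::comm_ring_1)^3^3) *v (y + z) = X *v y + X *v z"
  by (simp add: vec3_eq mv3 algebra_simps)
lemma mv_zero: "(X::('b::comm_ring_1)^3^3) *v 0 = 0"
  by (simp add: vec3_eq mv3)
lemma mv_scale: "(X::('b::comm_ring_1)^3^3) *v (t *s y) = t *s (X *v y)"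
  by (simp add: vec3_eq mv3 algebra_simps)
lemma transpose0_3: "transpose (0 :: ('b::comm_ring_1)^3^3) = 0"
  by (simp add: vec3_eq transpose_def)
lemma cross_diff_l: "cross (a - b) c = cross a c - cross b c"
  by (simp add: vec3_eq algebra_simps)
lemma I1: "dotp b' (cross b w - cross b' z) = - dotp w (cross b b')"
  by (simp add: dotp3 algebra_simps)
lemma I2: "dotp b (cross b w - cross b' z) = - dotp z (cross b b')"
  by (simp add: dotp3 algebra_simps)
lemma E_form: "(mat 1 - mat m ** (C::('b::comm_ring_1)^3^3)) *v w = w - m *s (C *v w)"
  by (simp add: vec3_eq mv3 mm3 mat_def algebra_simps)

definition Phi :: "('a::{field,finite})^3^3 \<Rightarrow> nat \<Rightarrow> 'a^3 \<Rightarrow> 'a^3^3" where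
  "Phi A i b = transpose (altm b ** matpow A (CARD('a)^3 - 1 - i))"

context
  fixes A :: "('a::{field,finite})^3^3"
  assumes sA: "singer_cycle A"
begin

lemma TPhi: assumes h: "i \<le> CARD('a)^3 - 1" shows "transpose (Phi A i b) ** matpow A i = altm b"
proof -
  have "matpow A (CARD('a)^3 - 1 - i) ** matpow A i = mat 1" by (rule mp_inv2[OF sA h])
  then show ?thesis by (simp only: Phi_def transpose_transpose matrix_mul_assoc[symmetric] matrix_mul_rid)
qed

lemma G1: "i \<le> CARD('a)^3 - 1 \<Longrightarrow> dotp y (cross b w) = dotp (Phi A i b *v y) (matpow A i *v w)"
  by (simp add: dotp_transpose matrix_vector_mul_assoc TPhi altm_mv)

lemma CM1: "i \<le> CARD('a)^3 - 1 \<Longrightarrow> dotp (Phi A i b *v y) (matpow A i *v y) = 0"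
  using G1[of i y b y] by (simp add: dotp_cross_self)

lemma CM2: assumes "i \<le> CARD('a)^3 - 1" "\<And>y. dotp (M *v y) (matpow A i *v y) = 0"
  shows "\<exists>b. M = Phi A i b"
proof -
  let ?B = "transpose M ** matpow A i"
  have "dotp y (?B *v y) = 0" for y
    using assms(2)[of y] by (simp add: dotp_transpose matrix_vector_mul_assoc[symmetric])
  then obtain b where b: "?B = altm b" using alt_char by blast
  have "transpose M = transpose M ** (matpow A i ** matpow A (CARD('a)^3 - 1 - i))"
    using mp_inv1[OF sA assms(1)] by simp
  also have "\<dots> = altm b ** matpow A (CARD('a)^3 - 1 - i)" using b by (simp add: matrix_mul_assoc)
  finally have "M = Phi A i b" unfolding Phi_def by (metis transpose_transpose)
  then show ?thesis by blast
qed

lemma Phi_inj: "i \<le> CARD('a)^3 - 1 \<Longrightarrow> Phi A i b = Phi A i b' \<Longrightarrow> b = b'"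
  using TPhi[of i b] TPhi[of i b'] altm_inj by metis

lemma Phi_0: "Phi A i 0 = 0"
  by (simp add: Phi_def altm_0 zero_mm3 transpose0_3)

lemma Phi_nz: "i \<le> CARD('a)^3 - 1 \<Longrightarrow> b \<noteq> 0 \<Longrightarrow> Phi A i b \<noteq> 0"
  using Phi_inj Phi_0 by metis

lemma Phi_ker: assumes "i \<le> CARD('a)^3 - 1" "b \<noteq> 0"
  shows "Phi A i b *v y = 0 \<longleftrightarrow> (\<exists>t. y = t *s b)"
proof
  assume h: "Phi A i b *v y = 0"
  have "dotp y (cross b w) = 0" for w
    using G1[OF assms(1), of y b w] h by (simp add: dotp3)
  then have "dotp w (cross y b) = 0" for w using triple[of y b w] by simp
  then have "cross y b = 0" by (metis dotp_zero dotp_comm)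
  then have "cross b y = 0" by (metis cross_anti neg_equal_0_iff_equal)
  then show "\<exists>t. y = t *s b" using cross_zero assms(2) by blast
next
  assume "\<exists>t. y = t *s b"
  then obtain t where t: "y = t *s b" by blast
  have "dotp (Phi A i b *v y) z = 0" for z
  proof -
    have "dotp (Phi A i b *v y) z = dotp y (transpose (Phi A i b) *v z)" by (rule dotp_transpose)
    also have "\<dots> = dotp y (altm b *v (matpow A (CARD('a)^3 - 1 - i) *v z))"
      by (simp only: Phi_def transpose_transpose matrix_vector_mul_assoc)
    also have "\<dots> = 0" by (simp only: t dotp_scale_l altm_mv dotp_cross_self2 mult_zero_right)
    finally show ?thesis .
  qed
  then show "Phi A i b *v y = 0" using dotp_zero by blast
qed

lemma pow_pm_sub: "\<exists>a b c. matpow A k - mat t = pm A a b c"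
proof -
  obtain a b c where "matpow A k = pm A a b c" using mp_pm by blast
  then show ?thesis using pm_sub[of A a b c t 0 0] pm_mat[of t A] by metis
qed

lemma no_eig: assumes "0 < k" "k \<le> CARD('a)^2 + CARD('a)" "matpow A k *v y = t *s y" "y \<noteq> 0"
  shows False
proof -
  obtain a b c where p: "matpow A k - mat t = pm A a b c" using pow_pm_sub by blast
  have "pm A a b c *v y = 0" using assms(3) by (simp add: p[symmetric] mv_diff mv_mat)
  then have "pm A a b c = 0" using E1[OF sA] assms(4) by blast
  then have "matpow A k = mat t" using p by simp
  then show False using F2[OF sA] assms by blast
qed

lemma no_eigT: assumes "0 < k" "k \<le> CARD('a)^2 + CARD('a)" "transpose (matpow A k) *v y = t *s y" "y \<noteq> 0"
  shows False
proof -
  obtain a b c where p: "matpow A k - mat t = pm A a b c" using pow_pm_sub by blast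
  have "transpose (matpow A k - mat t) = transpose (matpow A k) - mat t"
    by (simp add: vec3_eq transpose_def mat_def)
  then have "transpose (pm A a b c) *v y = 0" using assms(3) by (simp add: p[symmetric] mv_diff mv_mat)
  then have "pm A a b c = 0" using E2[OF sA] assms(4) by blast
  then have "matpow A k = mat t" using p by simp
  then show False using F2[OF sA] assms by blast
qed

end

context
  fixes A :: "('a::{field,finite})^3^3"
  assumes sA: "singer_cycle A"
begin

lemma small_le: "i \<le> CARD('a)^2 + CARD('a) \<Longrightarrow> i \<le> CARD('a)^3 - 1"
  using N_ge[OF sA] by linarith

lemma DJ: assumes "i < j" "j \<le> CARD('a)^2 + CARD('a)" "b \<noteq> 0" "Phi A i b = Phi A j b'"
  shows False
proof -
  let ?M = "Phi A i b"
  let ?C = "matpow A (j - i)"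
  have iN: "i \<le> CARD('a)^3 - 1" and jN: "j \<le> CARD('a)^3 - 1" using assms small_le by auto
  have Aj: "matpow A j = matpow A i ** ?C" using assms(1) by (metis mp_add le_add_diff_inverse less_imp_le)
  have Q: "dotp y (cross b (?C *v y)) = 0" for y
  proof -
    have "dotp y (cross b (?C *v y)) = dotp (?M *v y) (matpow A i *v (?C *v y))" by (rule G1[OF sA iN])
    also have "\<dots> = dotp (Phi A j b' *v y) (matpow A j *v y)"
      using assms(4) Aj by (simp add: matrix_vector_mul_assoc)
    also have "\<dots> = 0" by (rule CM1[OF sA jN])
    finally show ?thesis .
  qed
  have "dotp y (cross b (?C *v b)) = 0" for y
  proof -
    have "0 = dotp (y + b) (cross b (?C *v (y + b)))" using Q by simp
    also have "\<dots> = dotp y (cross b (?C *v y)) + dotp y (cross b (?C *v b))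
        + dotp b (cross b (?C *v y)) + dotp b (cross b (?C *v b))"
      by (simp add: mv_add cross_add_r dotp_add_l dotp_add_r)
    also have "\<dots> = dotp y (cross b (?C *v b))" using Q by (simp add: dotp_cross_self2)
    finally show ?thesis by simp
  qed
  then have "cross b (?C *v b) = 0" by (metis dotp_zero dotp_comm)
  then obtain t where "?C *v b = t *s b" using cross_zero assms(3) by blast
  moreover have "j - i \<le> CARD('a)^2 + CARD('a)" "0 < j - i" using assms by linarith+
  ultimately show False using no_eig[OF sA, of "j - i" b t] assms by blast
qed

lemma RK: assumes "j \<le> i" "i \<le> CARD('a)^2 + CARD('a)" "b \<noteq> 0" "b' \<noteq> 0" "i = j \<longrightarrow> b \<noteq> b'"
  shows "\<exists>w1 w2. cross (cross b w1 - cross b' (matpow A (i - j) *v w1))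
                        (cross b w2 - cross b' (matpow A (i - j) *v w2)) \<noteq> 0"
proof (rule ccontr)
  let ?C = "matpow A (i - j)"
  define f where "f w = cross b w - cross b' (?C *v w)" for w
  assume "\<not> ?thesis"
  then have H: "cross (f w1) (f w2) = 0" for w1 w2 unfolding f_def by blast
  show False
  proof (cases "i = j")
    case True
    then have "f w = cross (b - b') w" for w by (simp add: f_def cross_diff_l)
    moreover have "b - b' \<noteq> 0" using True assms by simp
    ultimately show False using rank2 H by metis
  next
    case False
    then have k: "0 < i - j" "i - j \<le> CARD('a)^2 + CARD('a)" using assms by auto
    show False
    proof (cases "cross b b' = 0")
      case False
      let ?g = "cross b b'"
      obtain w0 where w0: "dotp w0 ?g \<noteq> 0" using dotp_nonzero False by blast
      have fb': "dotp b' (f w) = - dotp w ?g" for w by (simp add: f_def I1)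
      have fb: "dotp b (f w) = - dotp (?C *v w) ?g" for w by (simp add: f_def I2)
      have fw0: "f w0 \<noteq> 0"
      proof
        assume "f w0 = 0"
        then have "dotp b' (f w0) = 0" by (simp add: dotp3)
        then show False using fb'[of w0] w0 by simp
      qed
      define lam where "lam = dotp (?C *v w0) ?g / dotp w0 ?g"
      have "dotp w (transpose ?C *v ?g - lam *s ?g) = 0" for w
      proof -
        obtain t where t: "f w = t *s f w0" using cross_zero[OF fw0 H[of w0 w]] by blast
        have e1: "dotp w ?g = t * dotp w0 ?g" using fb'[of w] fb'[of w0] t by (simp add: dotp_scale_r)
        have e2: "dotp (?C *v w) ?g = t * dotp (?C *v w0) ?g" using fb[of w] fb[of w0] t by (simp add: dotp_scale_r)
        have "dotp w (transpose ?C *v ?g) = dotp (?C *v w) ?g" by (simp only: dotp_transpose)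
        also have "\<dots> = lam * dotp w ?g" using e1 e2 w0 by (simp add: lam_def)
        finally show ?thesis by (simp add: dotp_diff_r dotp_scale_r)
      qed
      then have "transpose ?C *v ?g - lam *s ?g = 0" by (metis dotp_zero dotp_comm)
      then have "transpose ?C *v ?g = lam *s ?g" by simp
      then show False using no_eigT[OF sA k, of ?g lam] False by blast
    next
      case True
      then obtain mu where mu: "b' = mu *s b" using cross_zero assms(3) by blast
      have mu0: "mu \<noteq> 0" using mu assms(4) by auto
      let ?E = "mat 1 - mat mu ** ?C"
      have fE: "f w = cross b (?E *v w)" for w
        by (simp add: f_def E_form mu cross_scale_l cross_scale_r cross_diff_r)
      obtain a1 b1 c1 where p: "?C = pm A a1 b1 c1" using mp_pm by blast
      have Ep: "?E = pm A (1 - mu * a1) (0 - mu * b1) (0 - mu * c1)"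
        by (simp only: p pm_smul pm_mat[of 1 A] pm_sub)
      show False
      proof (cases "?E = 0")
        case True
        then have "mat 1 = mat mu ** ?C" by simp
        then have "mat (1/mu) ** mat 1 = mat (1/mu) ** (mat mu ** ?C)" by simp
        then have "?C = mat (1/mu)" using mu0 by (simp add: matrix_mul_assoc mat_mult3)
        then show False using F2[OF sA _ k] by blast
      next
        case False
        obtain v1 v2 where v: "cross (cross b v1) (cross b v2) \<noteq> 0" using rank2 assms(3) by blast
        obtain w1 where w1: "?E *v w1 = v1" using E3[OF sA] False Ep by metis
        obtain w2 where w2: "?E *v w2 = v2" using E3[OF sA] False Ep by metis
        show False using H[of w1 w2] v fE w1 w2 by simp
      qed
    qed
  qed
qed

lemma KEY: assumes "j \<le> i" "i \<le> CARD('a)^2 + CARD('a)" "b \<noteq> 0" "b' \<noteq> 0" "i = j \<longrightarrow> b \<noteq> b'"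
  shows "\<exists>g. \<forall>y. Phi A i b *v y = Phi A j b' *v y \<longrightarrow> (\<exists>t. y = t *s g)"
proof -
  let ?C = "matpow A (i - j)"
  define f where "f w = cross b w - cross b' (?C *v w)" for w
  obtain w1 w2 where g: "cross (f w1) (f w2) \<noteq> 0" using RK[OF assms] unfolding f_def by blast
  have iN: "i \<le> CARD('a)^3 - 1" and jN: "j \<le> CARD('a)^3 - 1" using assms small_le by auto
  have Ai: "matpow A i = matpow A j ** ?C" using assms(1) by (metis mp_add le_add_diff_inverse)
  have orth: "dotp y (f w) = 0" if h: "Phi A i b *v y = Phi A j b' *v y" for y w
  proof -
    have "dotp y (cross b w) = dotp (Phi A i b *v y) (matpow A i *v w)" by (rule G1[OF sA iN])
    moreover have "dotp y (cross b' (?C *v w)) = dotp (Phi A j b' *v y) (matpow A j *v (?C *v w))"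
      by (rule G1[OF sA jN])
    ultimately show ?thesis using h Ai by (simp add: f_def dotp_diff_r matrix_vector_mul_assoc)
  qed
  show ?thesis
  proof (rule exI[of _ "cross (f w1) (f w2)"], intro allI impI)
    fix y assume h: "Phi A i b *v y = Phi A j b' *v y"
    have "cross (cross (f w1) (f w2)) y = 0"
      using orth[OF h, of w1] orth[OF h, of w2] by (simp add: bac dotp_comm)
    then have "cross (cross (f w1) (f w2)) y = 0" .
    then show "\<exists>t. y = t *s cross (f w1) (f w2)" using cross_zero g by blast
  qed
qed

end

definition emb :: "('b::zero)^3 \<Rightarrow> 'b^3 \<Rightarrow> 'b^6" where
  "emb y x = (\<chi> k. if k = 0 then x$0 else if k = 1 then x$1 else if k = 2 then x$2
     else if k = 3 then y$0 else if k = 4 then y$1 else y$2)"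

lemma vecX_emb[simp]: "vecX (emb y x) = x"
  by (simp add: vec3_eq vecX_def idxX_def emb_def)
lemma vecY_emb[simp]: "vecY (emb y x) = y"
  by (simp add: vec3_eq vecY_def idxY_def emb_def)

lemma emb_vec: "emb (vecY v) (vecX v) = v"
proof -
  have "emb (vecY v) (vecX v) $ k = v $ k" for k
    using exhaust6[of k] by (auto simp: emb_def vecX_def vecY_def idxX_def idxY_def)
  then show ?thesis by (simp add: vec_eq_iff)
qed

lemma vec6_eqI: "vecX v = vecX w \<Longrightarrow> vecY v = vecY w \<Longrightarrow> v = (w::('b::zero)^6)"
  by (metis emb_vec)

lemma vecX_add: "vecX (v + w) = vecX v + vecX w" by (simp add: vec3_eq vecX_def)
lemma vecY_add: "vecY (v + w) = vecY v + vecY w" by (simp add: vec3_eq vecY_def)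
lemma vecX_diff: "vecX (v - w) = vecX v - vecX w" by (simp add: vec3_eq vecX_def)
lemma vecY_diff: "vecY (v - w) = vecY v - vecY w" by (simp add: vec3_eq vecY_def)
lemma vecX_scale: "vecX (c *s v) = c *s vecX v" by (simp add: vec3_eq vecX_def)
lemma vecY_scale: "vecY (c *s v) = c *s vecY v" by (simp add: vec3_eq vecY_def)
lemma vecX_0: "vecX 0 = 0" by (simp add: vec3_eq vecX_def)
lemma vecY_0: "vecY 0 = 0" by (simp add: vec3_eq vecY_def)

lemma emb_scale: "emb (c *s y) (c *s x) = c *s emb y x"
  by (rule vec6_eqI) (simp_all add: vecX_scale vecY_scale)

lemma lin_vecY: "Vector_Spaces.linear (*s) (*s) (vecY :: ('a::field)^6 \<Rightarrow> 'a^3)"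
  by (simp add: Vector_Spaces.linear_iff vec.vector_space_axioms vecY_add vecY_scale)

definition graph :: "('a::field)^3^3 \<Rightarrow> ('a^6) set" where
  "graph M = {v. vecX v = M *v vecY v}"

lemma lin_emb: "Vector_Spaces.linear (*s) (*s) (\<lambda>y. emb y ((M::('a::field)^3^3) *v y))"
proof -
  have "emb (y + z) (M *v (y + z)) = emb y (M *v y) + emb z (M *v z)" for y z
    by (rule vec6_eqI) (simp_all add: vecX_add vecY_add mv_add)
  moreover have "emb (c *s y) (M *v (c *s y)) = c *s emb y (M *v y)" for c y
    by (simp add: mv_scale emb_scale)
  ultimately show ?thesis by (simp add: Vector_Spaces.linear_iff vec.vector_space_axioms)
qed

lemma graph_img: "graph M = (\<lambda>y. emb y (M *v y)) ` UNIV"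
proof
  show "graph M \<subseteq> (\<lambda>y. emb y (M *v y)) ` UNIV"
  proof
    fix v assume "v \<in> graph M"
    then have "vecX v = M *v vecY v" by (simp add: graph_def)
    then have "v = emb (vecY v) (M *v vecY v)" using emb_vec[of v] by metis
    then show "v \<in> (\<lambda>y. emb y (M *v y)) ` UNIV" by blast
  qed
  show "(\<lambda>y. emb y (M *v y)) ` UNIV \<subseteq> graph M" by (auto simp: graph_def)
qed

lemma graph_subspace: "vec.subspace (graph (M::('a::field)^3^3))"
  unfolding graph_img by (rule vec.linear_subspace_image[OF lin_emb]) (rule vec.subspace_UNIV)

lemma graph_dim: "vec.dim (graph (M::('a::field)^3^3)) = 3"
proof -
  have "inj_on (\<lambda>y. emb y (M *v y)) (vec.span UNIV)"
    by (rule inj_onI) (metis vecY_emb)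
  then have "vec.dim (graph M) = vec.dim (UNIV :: ('a^3) set)"
    unfolding graph_img by (rule vec.dim_image_eq[OF lin_emb])
  then show ?thesis by (simp add: card_cart_basis)
qed

lemma graph_plane: "pg_plane (graph (M::('a::field)^3^3))"
  by (simp add: pg_plane_def graph_subspace graph_dim)

lemma graph_inj: assumes "graph M = graph (M'::('a::field)^3^3)" shows "M = M'"
proof -
  have "M *v y = M' *v y" for y
  proof -
    have "emb y (M *v y) \<in> graph M" by (simp add: graph_def)
    then have "emb y (M *v y) \<in> graph M'" using assms by simp
    then show ?thesis by (simp add: graph_def)
  qed
  then show ?thesis by (simp add: matrix_eq)
qed

lemma zero_mv: "(0::('b::comm_ring_1)^3^3) *v y = 0" by (simp add: vec3_eq mv3)

lemma pi1_graph: "pi1 = graph 0"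
  by (simp add: pi1_def graph_def zero_mv)

lemma dim_pi1: "vec.dim (pi1 :: ('a::field^6) set) = 3"
  by (simp add: pi1_graph graph_dim)

lemma graph_pi2: "graph M \<inter> pi2 = {0}"
proof -
  have "v = 0" if "v \<in> graph M" "v \<in> pi2" for v
    using that by (intro vec6_eqI) (simp_all add: graph_def pi2_def vecX_0 vecY_0 mv_zero)
  moreover have "(0::'a^6) \<in> graph M \<inter> pi2" by (simp add: graph_def pi2_def vecX_0 vecY_0 mv_zero)
  ultimately show ?thesis by blast
qed

lemma dim_span1: "vec.dim (vec.span {x}) \<le> 1"
  by (simp add: vec.dim_span)

lemma dim_span1': "x \<noteq> 0 \<Longrightarrow> vec.dim (vec.span {x}) = 1"
  by (simp add: vec.dim_span)

lemma surj_vecY: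
  assumes W: "vec.subspace W" "vec.dim W = 3" "W \<inter> pi2 = {0}"
  shows "\<exists>w\<in>W. vecY w = (y :: ('a::field)^3)"
proof -
  have "inj_on vecY (vec.span W)"
  proof (rule inj_onI)
    fix u v assume uv: "u \<in> vec.span W" "v \<in> vec.span W" "vecY u = vecY v"
    then have "u - v \<in> W" using W(1) by (simp add: vec.span_eq_iff[THEN iffD2] vec.subspace_diff)
    moreover have "u - v \<in> pi2" using uv(3) by (simp add: pi2_def vecY_diff)
    ultimately have "u - v = 0" using W(3) by blast
    then show "u = v" by simp
  qed
  then have "vec.dim (vecY ` W) = 3" using W(2) by (simp add: vec.dim_image_eq[OF lin_vecY])
  then have "vec.span (vecY ` W) = UNIV"
    using vec.dim_eq_full[of "vecY ` W"] by (simp add: vec.dimension_def card_cart_basis)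
  moreover have "vec.span (vecY ` W) = vecY ` W"
    using vec.linear_subspace_image[OF lin_vecY W(1)] vec.span_eq_iff by blast
  ultimately show ?thesis by (metis UNIV_I imageE)
qed

lemma plane_graph:
  assumes W: "vec.subspace W" "vec.dim W = 3" "W \<inter> pi2 = {0}"
  shows "\<exists>M. W = graph (M :: ('a::field)^3^3)"
proof -
  obtain w0 where w0: "w0 \<in> W" "vecY w0 = v3 1 0 0" using surj_vecY[OF W] by blast
  obtain w1 where w1: "w1 \<in> W" "vecY w1 = v3 0 1 0" using surj_vecY[OF W] by blast
  obtain w2 where w2: "w2 \<in> W" "vecY w2 = v3 0 0 1" using surj_vecY[OF W] by blast
  define M :: "'a^3^3" where "M = v3 (v3 (vecX w0$0) (vecX w1$0) (vecX w2$0))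
     (v3 (vecX w0$1) (vecX w1$1) (vecX w2$1)) (v3 (vecX w0$2) (vecX w1$2) (vecX w2$2))"
  have sub: "graph M \<subseteq> W"
  proof
    fix v assume "v \<in> graph M"
    then have v: "vecX v = M *v vecY v" by (simp add: graph_def)
    let ?y = "vecY v"
    let ?u = "?y$0 *s w0 + ?y$1 *s w1 + ?y$2 *s w2"
    have uW: "?u \<in> W" using w0(1) w1(1) w2(1) W(1)
      by (meson vec.subspace_add vec.subspace_scale)
    have "vecY ?u = ?y"
      using w0(2) w1(2) w2(2) by (simp add: vecY_add vecY_scale vec3_eq)
    moreover have "vecX ?u = M *v ?y"
      by (simp add: vecX_add vecX_scale vec3_eq mv3 M_def mult.commute)
    ultimately have "?u = v" using v vec6_eqI by metis
    then show "v \<in> W" using uW by simp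
  qed
  have "W \<subseteq> graph M"
  proof
    fix w assume w: "w \<in> W"
    let ?v = "emb (vecY w) (M *v vecY w)"
    have "?v \<in> W" using sub by (simp add: graph_def subsetD)
    then have "w - ?v \<in> W" using w W(1) by (simp add: vec.subspace_diff)
    moreover have "w - ?v \<in> pi2" by (simp add: pi2_def vecY_diff)
    ultimately have "w - ?v = 0" using W(3) by blast
    then have "w = ?v" by simp
    then have "vecX w = M *v vecY w" by (metis vecX_emb vecY_emb)
    then show "w \<in> graph M" by (simp add: graph_def)
  qed
  then show ?thesis using sub by blast
qed

context
  fixes A :: "('a::{field,finite})^3^3"
  assumes sA: "singer_cycle A"
begin

lemma quad_graph: "v \<in> graph M \<Longrightarrow> quadform A i v = dotp (M *v vecY v) (matpow A i *v vecY v)"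
  by (simp add: quadform_def dotp_def graph_def)

lemma graph_pi1: assumes "i \<le> CARD('a)^2 + CARD('a)" "b \<noteq> 0"
  shows "graph (Phi A i b) \<inter> pi1 = vec.span {emb b 0}"
proof -
  have iN: "i \<le> CARD('a)^3 - 1" using small_le[OF sA assms(1)] .
  have "graph (Phi A i b) \<inter> pi1 = range (\<lambda>t. t *s emb b 0)"
  proof
    show "graph (Phi A i b) \<inter> pi1 \<subseteq> range (\<lambda>t. t *s emb b 0)"
    proof
      fix v assume v: "v \<in> graph (Phi A i b) \<inter> pi1"
      then have "Phi A i b *v vecY v = 0" "vecX v = 0" by (auto simp: graph_def pi1_def)
      then obtain t where t: "vecY v = t *s b" using Phi_ker[OF sA iN assms(2)] by blast
      have "v = t *s emb b 0"
        by (rule vec6_eqI) (simp_all add: vecX_scale vecY_scale t \<open>vecX v = 0\<close>)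
      then show "v \<in> range (\<lambda>t. t *s emb b 0)" by blast
    qed
    show "range (\<lambda>t. t *s emb b 0) \<subseteq> graph (Phi A i b) \<inter> pi1"
    proof
      fix v assume "v \<in> range (\<lambda>t. t *s emb b 0)"
      then obtain t where t: "v = t *s emb b 0" by blast
      have "Phi A i b *v (t *s b) = 0" using Phi_ker[OF sA iN assms(2)] by blast
      then show "v \<in> graph (Phi A i b) \<inter> pi1"
        by (simp add: t graph_def pi1_def vecX_scale vecY_scale)
    qed
  qed
  then show ?thesis by (simp add: vec.span_singleton)
qed

lemma GC1: assumes "i \<le> CARD('a)^2 + CARD('a)" "b \<noteq> 0"
  shows "graph (Phi A i b) \<in> G A i"
proof -
  have iN: "i \<le> CARD('a)^3 - 1" using small_le[OF sA assms(1)] .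
  let ?W = "graph (Phi A i b)"
  have q: "?W \<in> quadric_planes A i"
    unfolding quadric_planes_def using graph_plane quad_graph CM1[OF sA iN] by auto
  have e: "emb b 0 \<noteq> 0" using assms(2) by (metis vecY_emb vecY_0)
  have d1: "vec.dim (?W \<inter> pi1) = 1" using graph_pi1[OF assms] dim_span1'[OF e] by simp
  have sc: "same_class ?W pi1" using d1 by (simp add: same_class_def)
  have ne: "?W \<noteq> pi1"
  proof
    assume "?W = pi1"
    then have "vec.dim (?W \<inter> pi1) = vec.dim (pi1 :: ('a^6) set)" by simp
    then show False using d1 dim_pi1[where 'a='a] by simp
  qed
  show ?thesis using q sc ne graph_pi2 by (simp add: G_def)
qed

lemma GC2: assumes "i \<le> CARD('a)^2 + CARD('a)" "W \<in> G A i"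
  shows "\<exists>b. b \<noteq> 0 \<and> W = graph (Phi A i b)"
proof -
  have iN: "i \<le> CARD('a)^3 - 1" using small_le[OF sA assms(1)] .
  have W: "vec.subspace W" "vec.dim W = 3" "W \<inter> pi2 = {0}" "W \<noteq> pi1"
    and Q: "\<forall>v\<in>W. quadform A i v = 0"
    using assms(2) by (auto simp: G_def quadric_planes_def pg_plane_def)
  obtain M where M: "W = graph M" using plane_graph[OF W(1-3)] by blast
  have "dotp (M *v y) (matpow A i *v y) = 0" for y
  proof -
    have "emb y (M *v y) \<in> W" using M by (simp add: graph_def)
    then show ?thesis using Q quad_graph[of "emb y (M *v y)" M i] M by simp
  qed
  then obtain b where b: "M = Phi A i b" using CM2[OF sA iN] by blast
  have "b \<noteq> 0"
  proof
    assume "b = 0"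
    then have "M = 0" using b Phi_0[OF sA] by simp
    then have "W = pi1" using M pi1_graph by metis
    then show False using W(4) by simp
  qed
  then show ?thesis using M b by blast
qed

lemma G_eq: assumes "i \<le> CARD('a)^2 + CARD('a)"
  shows "G A i = (\<lambda>b. graph (Phi A i b)) ` (UNIV - {0})"
proof
  show "G A i \<subseteq> (\<lambda>b. graph (Phi A i b)) ` (UNIV - {0})"
  proof
    fix W assume "W \<in> G A i"
    then obtain b where "b \<noteq> 0" "W = graph (Phi A i b)" using GC2[OF assms] by blast
    then show "W \<in> (\<lambda>b. graph (Phi A i b)) ` (UNIV - {0})" by blast
  qed
  show "(\<lambda>b. graph (Phi A i b)) ` (UNIV - {0}) \<subseteq> G A i"
    using GC1[OF assms] by blast
qed

lemma card_G: assumes "i \<le> CARD('a)^2 + CARD('a)"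
  shows "card (G A i) = CARD('a)^3 - 1"
proof -
  have iN: "i \<le> CARD('a)^3 - 1" using small_le[OF sA assms(1)] .
  have "inj_on (\<lambda>b. graph (Phi A i b)) (UNIV - {0})"
    by (rule inj_onI) (metis graph_inj Phi_inj[OF sA iN])
  then have "card (G A i) = card (UNIV - {0::'a^3})" by (simp add: G_eq[OF assms] card_image)
  also have "\<dots> = CARD('a)^3 - 1" by (simp add: card_Diff_singleton)
  finally show ?thesis .
qed

lemma G_disj: assumes "i \<le> CARD('a)^2 + CARD('a)" "j \<le> CARD('a)^2 + CARD('a)" "i \<noteq> j"
  shows "G A i \<inter> G A j = {}"
proof (rule ccontr)
  assume "G A i \<inter> G A j \<noteq> {}"
  then obtain W where "W \<in> G A i" "W \<in> G A j" by blast
  then obtain b b' where b: "b \<noteq> 0" "W = graph (Phi A i b)" and b': "b' \<noteq> 0" "W = graph (Phi A j b')"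
    using GC2 assms by metis
  then have e: "Phi A i b = Phi A j b'" using graph_inj by metis
  show False
  proof (cases "i < j")
    case True
    show False using DJ[OF sA True assms(2) b(1) e] by blast
  next
    case False
    then have "j < i" using assms(3) by simp
    then show False using DJ[OF sA _ assms(1) b'(1)] e by metis
  qed
qed

lemma INT: assumes "j \<le> i" "i \<le> CARD('a)^2 + CARD('a)" "b \<noteq> 0" "b' \<noteq> 0" "i = j \<longrightarrow> b \<noteq> b'"
  shows "vec.dim (graph (Phi A i b) \<inter> graph (Phi A j b')) \<le> 1"
proof -
  obtain g where g: "\<And>y. Phi A i b *v y = Phi A j b' *v y \<Longrightarrow> \<exists>t. y = t *s g"
    using KEY[OF sA assms] by blast
  let ?e = "emb g (Phi A i b *v g)"
  have "graph (Phi A i b) \<inter> graph (Phi A j b') \<subseteq> vec.span {?e}"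
  proof
    fix v assume v: "v \<in> graph (Phi A i b) \<inter> graph (Phi A j b')"
    then have h1: "vecX v = Phi A i b *v vecY v" and h2: "vecX v = Phi A j b' *v vecY v"
      by (auto simp: graph_def)
    then have "Phi A i b *v vecY v = Phi A j b' *v vecY v" by simp
    then obtain t where t: "vecY v = t *s g" using g by blast
    have "v = t *s ?e"
      apply (rule vec6_eqI)
      using v t by (simp_all add: vecX_scale vecY_scale graph_def mv_scale)
    then show "v \<in> vec.span {?e}" unfolding vec.span_singleton by blast
  qed
  then have "vec.dim (graph (Phi A i b) \<inter> graph (Phi A j b')) \<le> vec.dim (vec.span {?e})"
    by (rule vec.dim_subset)
  then show ?thesis using dim_span1[of ?e] by linarith
qed

end

theorem theorem4p7:
  fixes A :: "('a::{field,finite})^3^3"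
  assumes "singer_cycle A"
  defines "q \<equiv> CARD('a)"
  defines "C \<equiv> (\<Union>i\<in>{0..q^2+q}. G A i)"
  shows "(\<forall>W\<in>C. pg_plane W)
       \<and> card C = (q^3 - 1) * (q^2 + q + 1)
       \<and> (\<forall>U\<in>C. \<forall>W\<in>C. U \<noteq> W \<longrightarrow> vec.dim (U \<inter> W) \<le> 1)"
  unfolding C_def q_def
proof (intro conjI)
  note sA = assms(1)
  let ?n = "CARD('a)^2 + CARD('a)"
  let ?C = "\<Union>i\<in>{0..?n}. G A i"
  show "\<forall>W\<in>?C. pg_plane W" by (auto simp: G_def quadric_planes_def)
  have disj: "\<forall>i\<in>{0..?n}. \<forall>j\<in>{0..?n}. i \<noteq> j \<longrightarrow> G A i \<inter> G A j = {}"
    using G_disj[OF sA] by simp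
  have "card ?C = (\<Sum>i\<in>{0..?n}. card (G A i))"
    by (rule card_UN_disjoint) (simp, simp, rule disj)
  also have "\<dots> = (\<Sum>i\<in>{0..?n}. CARD('a)^3 - 1)"
    by (rule sum.cong) (simp_all add: card_G[OF sA])
  also have "\<dots> = (CARD('a)^3 - 1) * (?n + 1)" by (simp add: mult.commute)
  finally show "card ?C = (CARD('a)^3 - 1) * (CARD('a)^2 + CARD('a) + 1)" .
  show "\<forall>U\<in>?C. \<forall>W\<in>?C. U \<noteq> W \<longrightarrow> vec.dim (U \<inter> W) \<le> 1"
  proof (intro ballI impI)
    fix U W assume U: "U \<in> ?C" and W: "W \<in> ?C" and ne: "U \<noteq> W"
    obtain i where i: "i \<le> ?n" "U \<in> G A i" using U by auto
    obtain j where j: "j \<le> ?n" "W \<in> G A j" using W by auto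
    obtain b where b: "b \<noteq> 0" "U = graph (Phi A i b)" using GC2[OF sA i(1) i(2)] by blast
    obtain b' where b': "b' \<noteq> 0" "W = graph (Phi A j b')" using GC2[OF sA j(1) j(2)] by blast
    show "vec.dim (U \<inter> W) \<le> 1"
    proof (cases "j \<le> i")
      case True
      have "i = j \<longrightarrow> b \<noteq> b'" using ne b b' by auto
      then show ?thesis using INT[OF sA True i(1) b(1) b'(1)] b b' by simp
    next
      case False
      then have ji: "i \<le> j" by simp
      have "j = i \<longrightarrow> b' \<noteq> b" using ne b b' by auto
      then have "vec.dim (W \<inter> U) \<le> 1" using INT[OF sA ji j(1) b'(1) b(1)] b b' by simp
      then show ?thesis by (simp add: Int_commute)
    qed
  qed
qed

end
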